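(* Let $X_1,X_2,\dots$ be independent uniform random variables on $(0,1]$ and $\mathcal{U}_m^0=(0,X_1,\dots,X_m)$. As $m\to\infty$: $E[D^\alpha(\mathcal{U}_m^0)]\sim\frac{\Gamma(\alpha+1)}{1-\alpha}m^{1-\alpha}$ for $0<\alpha<1$; $E[D^1(\mathcal{U}_m^0)]-\log m\to\gamma-1$; $E[D^\alpha(\mathcal{U}_m^0)]=\frac1{\alpha-1}+O(m^{1-\alpha})$ for $\alpha>1$, where $\gamma$ is Euler's constant.
   Context: For a sequence $(0,x_1,\dots,x_m)$ with $x_i\in(0,1]$ and $x_0:=0$, the directed linear tree joins each $x_i$ ($i\ge1$) to $\max\{x_j:0\le j<i,\ x_j<x_i\}$, and its total weight with exponent $\alpha>0$ is $D^\alpha(0,x_1,\dots,x_m)=\sum_{i=1}^m(x_i-\max\{x_j:0\le j<i,\ x_j<x_i\})^\alpha$. *)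

theory Defs
  imports "HOL-Probability.Probability" "HOL-Library.Landau_Symbols"
begin

text \<open>A sequence (0, x_1, ..., x_m) is encoded by x :: nat => real, using x 1, ..., x m;
  the leading entry x_0 := 0 is implicit.\<close>

definition parent :: "(nat \<Rightarrow> real) \<Rightarrow> nat \<Rightarrow> real" where
  "parent x i = Max ({0} \<union> {x j | j. 1 \<le> j \<and> j < i \<and> x j < x i})"

definition D :: "real \<Rightarrow> nat \<Rightarrow> (nat \<Rightarrow> real) \<Rightarrow> real" where
  "D \<alpha> m x = (\<Sum>i = 1..m. (x i - parent x i) powr \<alpha>)"

definition U :: "nat \<Rightarrow> (nat \<Rightarrow> real) measure" where
  "U m = PiM {1..m} (\<lambda>_. uniform_measure lborel {0<..1})"

definition ED :: "real \<Rightarrow> nat \<Rightarrow> real" where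
  "ED \<alpha> m = (\<integral>x. D \<alpha> m x \<partial>U m)"

end

theory Submission
  imports Defs
begin


definition aa :: "real \<Rightarrow> nat \<Rightarrow> real" where
  "aa \<alpha> i = fact i / pochhammer (\<alpha> + 1) i"

lemma poch_pos: "\<alpha> > 0 \<Longrightarrow> pochhammer (\<alpha> + 1) i > (0::real)"
  by (intro pochhammer_pos) simp

lemma aa_Suc: "\<alpha> > 0 \<Longrightarrow> aa \<alpha> (Suc i) = aa \<alpha> i * (i + 1) / (\<alpha> + i + 1)"
  unfolding aa_def by (simp add: pochhammer_Suc field_simps)

lemma aa_0[simp]: "aa \<alpha> 0 = 1" by (simp add: aa_def)

lemma aa_tele:
  assumes "\<alpha> > 0"
  shows "(\<alpha> - 1) * (\<Sum>i=1..m. aa \<alpha> i) = 1 - (m + 1) * aa \<alpha> m"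
proof (induction m)
  case 0 then show ?case by simp
next
  case (Suc m)
  have "(\<alpha> - 1) * (\<Sum>i=1..Suc m. aa \<alpha> i) = (\<alpha> - 1) * (\<Sum>i=1..m. aa \<alpha> i) + (\<alpha> - 1) * aa \<alpha> (Suc m)"
    by (simp add: algebra_simps)
  also have "\<dots> = 1 - (m + 1) * aa \<alpha> m + (\<alpha> - 1) * aa \<alpha> (Suc m)" using Suc by simp
  also have "\<dots> = 1 - (Suc m + 1) * aa \<alpha> (Suc m)"
    using assms by (simp add: aa_Suc field_simps)
  finally show ?case by simp
qed

lemma aa_one: "aa 1 i = 1 / (i + 1)"
  by (induction i) (simp_all add: aa_Suc field_simps)

lemma aa_asym:
  assumes "\<alpha> > 0"
  shows "(\<lambda>n. aa \<alpha> n * real n powr \<alpha>) \<longlonglongrightarrow> Gamma (\<alpha> + 1)"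
proof -
  have "(\<lambda>n. \<alpha> * Gamma_series \<alpha> n) \<longlonglongrightarrow> \<alpha> * Gamma \<alpha>"
    by (intro tendsto_intros)
  also have "\<alpha> * Gamma \<alpha> = Gamma (\<alpha> + 1)" using assms by (subst Gamma_plus1) (auto elim!: nonpos_Ints_cases)
  finally have L: "(\<lambda>n. \<alpha> * Gamma_series \<alpha> n) \<longlonglongrightarrow> Gamma (\<alpha> + 1)" .
  have "eventually (\<lambda>n. \<alpha> * Gamma_series \<alpha> n = aa \<alpha> n * real n powr \<alpha>) sequentially"
    using eventually_gt_at_top[of 0]
  proof eventually_elim
    case (elim n)
    have "pochhammer \<alpha> (n + 1) = \<alpha> * pochhammer (\<alpha> + 1) n"
      by (simp add: pochhammer_rec)
    then show ?case using elim assms poch_pos[OF assms, of n]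
      by (simp add: Gamma_series_def aa_def powr_def field_simps)
  qed
  from Lim_transform_eventually[OF L this] show ?thesis .
qed

lemma pw0: "a < 0 \<Longrightarrow> (\<lambda>n. real n powr a) \<longlonglongrightarrow> 0"
  by (intro tendsto_neg_powr filterlim_real_sequentially)

lemma harm_aa: "(\<Sum>i=1..m. aa 1 i) = harm (Suc m) - 1"
proof (induction m)
  case 0 then show ?case by (simp add: harm_def)
next
  case (Suc m)
  have "(\<Sum>i=1..Suc m. aa 1 i) = (\<Sum>i=1..m. aa 1 i) + aa 1 (Suc m)" by simp
  also have "\<dots> = harm (Suc m) - 1 + 1 / (Suc m + 1)" using Suc by (simp add: aa_one)
  also have "\<dots> = harm (Suc (Suc m)) - 1" by (subst (2) harm_Suc) (simp add: field_simps)
  finally show ?case .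
qed

lemma asym_main:
  fixes E :: "real \<Rightarrow> nat \<Rightarrow> real"
  assumes E: "\<And>\<alpha> m. \<alpha> > 0 \<Longrightarrow> E \<alpha> m = (\<Sum>i=1..m. aa \<alpha> i)"
  shows "(\<forall>\<alpha>::real. 0 < \<alpha> \<and> \<alpha> < 1 \<longrightarrow>
            (\<lambda>m. E \<alpha> m) \<sim>[at_top] (\<lambda>m. Gamma (\<alpha> + 1) / (1 - \<alpha>) * real m powr (1 - \<alpha>)))
       \<and> ((\<lambda>m. E 1 m - ln (real m)) \<longlonglongrightarrow> euler_mascheroni - 1)
       \<and> (\<forall>\<alpha>::real. 1 < \<alpha> \<longrightarrow>
            (\<lambda>m. E \<alpha> m - 1 / (\<alpha> - 1)) \<in> O(\<lambda>m. real m powr (1 - \<alpha>)))"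
proof (intro conjI allI impI)
  fix \<alpha> :: real assume a: "0 < \<alpha> \<and> \<alpha> < 1"
  have G: "Gamma (\<alpha> + 1) > 0" using a by simp
  have L1: "(\<lambda>n. (1 + 1 / real n) * (aa \<alpha> n * real n powr \<alpha>) / Gamma (\<alpha> + 1)
        - real n powr (\<alpha> - 1) / Gamma (\<alpha> + 1)) \<longlonglongrightarrow> (1 + 0) * Gamma (\<alpha> + 1) / Gamma (\<alpha> + 1) - 0 / Gamma (\<alpha> + 1)"
    by (intro tendsto_intros aa_asym pw0 lim_1_over_n; use a G in \<open>auto simp del: Gamma_real_pos\<close>)
  hence L1': "(\<lambda>n. (1 + 1 / real n) * (aa \<alpha> n * real n powr \<alpha>) / Gamma (\<alpha> + 1)
        - real n powr (\<alpha> - 1) / Gamma (\<alpha> + 1)) \<longlonglongrightarrow> 1" using G by simp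
  have ev: "eventually (\<lambda>n. (1 + 1 / real n) * (aa \<alpha> n * real n powr \<alpha>) / Gamma (\<alpha> + 1)
        - real n powr (\<alpha> - 1) / Gamma (\<alpha> + 1) = E \<alpha> n / (Gamma (\<alpha> + 1) / (1 - \<alpha>) * real n powr (1 - \<alpha>))) sequentially"
    using eventually_gt_at_top[of 0]
  proof eventually_elim
    case (elim n)
    have t: "(1 - \<alpha>) * E \<alpha> n = (n + 1) * aa \<alpha> n - 1"
      using aa_tele[of \<alpha> n] E[of \<alpha> n] a by (simp add: algebra_simps)
    have p1: "real n powr (1 - \<alpha>) = real n / real n powr \<alpha>" using elim by (simp add: powr_diff)
    have p2: "real n powr (\<alpha> - 1) = real n powr \<alpha> / real n" using elim by (simp add: powr_diff)
    have eq: "E \<alpha> n = ((n + 1) * aa \<alpha> n - 1) / (1 - \<alpha>)" using t a by (simp add: field_simps)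
    have "real n powr \<alpha> > 0" using elim by simp
    have g1: "Gamma (1 + \<alpha>) > 0" by (rule Gamma_real_pos) (use a in simp)
    moreover have "1 - \<alpha> \<noteq> 0" "Gamma (1 + \<alpha>) \<noteq> 0" "Gamma (\<alpha> + 1) \<noteq> 0" using a G g1 by linarith+
    ultimately show ?case using elim unfolding eq p1 p2 by (simp add: field_simps)
  qed
  show "(\<lambda>m. E \<alpha> m) \<sim>[at_top] (\<lambda>m. Gamma (\<alpha> + 1) / (1 - \<alpha>) * real m powr (1 - \<alpha>))"
    by (rule asymp_equivI', rule Lim_transform_eventually[OF L1' ev])
next
  have "(\<lambda>m. (harm m - ln (real m)) + inverse (real (Suc m)) - 1) \<longlonglongrightarrow> euler_mascheroni + 0 - 1"
    by (intro tendsto_intros euler_mascheroni_LIMSEQ LIMSEQ_inverse_real_of_nat)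
  moreover have EQ: "\<And>m. (harm m - ln (real m)) + inverse (real (Suc m)) - 1 = E 1 m - ln (real m)"
  proof -
    fix m
    have "E 1 m = harm (Suc m) - 1" using E[of 1 m] harm_aa[of m] by simp
    then show "(harm m - ln (real m)) + inverse (real (Suc m)) - 1 = E 1 m - ln (real m)"
      by (simp add: harm_Suc)
  qed
  hence "(\<lambda>m. (harm m - ln (real m)) + inverse (real (Suc m)) - 1) = (\<lambda>m. E 1 m - ln (real m))"
    by (intro ext)
  ultimately show "(\<lambda>m. E 1 m - ln (real m)) \<longlonglongrightarrow> euler_mascheroni - 1"
    by (simp only: add_0_right)
next
  fix \<alpha> :: real assume a: "1 < \<alpha>"
  have L: "(\<lambda>n. - ((1 + 1 / real n) * (aa \<alpha> n * real n powr \<alpha>)) / (\<alpha> - 1)) \<longlonglongrightarrow>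
     - ((1 + 0) * Gamma (\<alpha> + 1)) / (\<alpha> - 1)"
    using a by (intro tendsto_intros aa_asym lim_1_over_n) auto
  have ev: "eventually (\<lambda>n. - ((1 + 1 / real n) * (aa \<alpha> n * real n powr \<alpha>)) / (\<alpha> - 1)
       = (E \<alpha> n - 1 / (\<alpha> - 1)) / real n powr (1 - \<alpha>)) sequentially"
    using eventually_gt_at_top[of 0]
  proof eventually_elim
    case (elim n)
    have t: "(\<alpha> - 1) * E \<alpha> n = 1 - (n + 1) * aa \<alpha> n"
      using aa_tele[of \<alpha> n] E[of \<alpha> n] a by (simp add: algebra_simps)
    have p1: "real n powr (1 - \<alpha>) = real n / real n powr \<alpha>" using elim by (simp add: powr_diff)
    have eq: "E \<alpha> n = (1 - (n + 1) * aa \<alpha> n) / (\<alpha> - 1)" using t a by (simp add: field_simps)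
    have "real n powr \<alpha> > 0" using elim by simp
    moreover have "\<alpha> - 1 \<noteq> 0" using a by simp
    have e2: "E \<alpha> n - 1 / (\<alpha> - 1) = - ((n + 1) * aa \<alpha> n) / (\<alpha> - 1)"
      unfolding eq by (simp add: diff_divide_distrib)
    show ?case unfolding e2 p1 using elim \<open>real n powr \<alpha> > 0\<close> \<open>\<alpha> - 1 \<noteq> 0\<close>
      by (simp add: field_simps)
  qed
  show "(\<lambda>m. E \<alpha> m - 1 / (\<alpha> - 1)) \<in> O(\<lambda>m. real m powr (1 - \<alpha>))"
    by (rule bigoI_tendsto[OF Lim_transform_eventually[OF L ev]])
       (use eventually_gt_at_top[of 0] in \<open>eventually_elim, simp\<close>)
qed



abbreviation Mu :: "real measure" where "Mu \<equiv> uniform_measure lborel {0<..1::real}"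

lemma Mu_prob: "prob_space Mu"
  by (rule prob_space_uniform_measure) auto

lemma sets_Mu[simp, measurable_cong]: "sets Mu = sets borel" by simp
lemma space_Mu[simp]: "space Mu = UNIV" by simp

lemma Mu_compl:
  assumes "0 < s" "s < t" "t \<le> 1"
  shows "emeasure Mu (- {t - s..<t}) = ennreal (1 - s)"
proof -
  interpret prob_space Mu by (rule Mu_prob)
  have "emeasure Mu {t - s..<t} = emeasure lborel ({0<..1} \<inter> {t - s..<t}) / emeasure lborel {0<..1::real}"
    by (rule emeasure_uniform_measure) auto
  also have "{0<..1} \<inter> {t - s..<t} = {t - s..<t}" using assms by auto
  finally have e: "emeasure Mu {t - s..<t} = ennreal s" using assms by (simp add: divide_ennreal_def)
  have "emeasure Mu (space Mu - {t - s..<t}) = emeasure Mu (space Mu) - emeasure Mu {t - s..<t}"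
    by (rule emeasure_compl) (simp, subst e, simp)
  also have "\<dots> = ennreal 1 - ennreal s" by (simp only: emeasure_space_1 e ennreal_1)
  also have "\<dots> = ennreal (1 - s)" using assms by (intro ennreal_minus) simp
  finally show ?thesis by (simp add: Compl_eq_Diff_UNIV)
qed

lemma parent_alt:
  assumes "1 \<le> i"
  shows "parent x i = Max ((\<lambda>j. if j = 0 then 0 else if x j < x i then x j else 0) ` {0..<i})"
  unfolding parent_def
proof (rule arg_cong[where f = Max])
  show "{0} \<union> {x j |j. 1 \<le> j \<and> j < i \<and> x j < x i} =
    (\<lambda>j. if j = 0 then 0 else if x j < x i then x j else 0) ` {0..<i}" (is "?A = ?B")
  proof
    show "?A \<subseteq> ?B"
    proof
      fix y assume "y \<in> ?A"
      then consider "y = 0" | j where "1 \<le> j" "j < i" "x j < x i" "y = x j" by blast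
      then show "y \<in> ?B"
      proof cases
        case 1 then show ?thesis using assms by (auto intro!: image_eqI[where x = 0])
      next
        case 2 then show ?thesis by (auto intro!: image_eqI[where x = j])
      qed
    qed
  next
    show "?B \<subseteq> ?A" by auto
  qed
qed

lemma parent_meas:
  assumes "i \<in> {1..m}"
  shows "(\<lambda>x. parent x i) \<in> borel_measurable (PiM {1..m} (\<lambda>_. Mu))"
proof -
  have "(\<lambda>x. Max ((\<lambda>j. if j = 0 then 0 else if x j < x i then x j else 0) ` {0..<i}))
      \<in> borel_measurable (PiM {1..m} (\<lambda>_. Mu))"
  proof (rule borel_measurable_Max)
    fix j assume j: "j \<in> {0..<i}"
    show "(\<lambda>x. if j = 0 then 0 else if x j < x i then x j else (0::real)) \<in> borel_measurable (PiM {1..m} (\<lambda>_. Mu))"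
    proof (cases "j = 0")
      case False
      then have [measurable]: "j \<in> {1..m}" "i \<in> {1..m}" using j assms by auto
      show ?thesis using False by measurable
    qed simp
  qed simp
  then show ?thesis using assms by (simp add: parent_alt)
qed

lemma D_meas: "D \<alpha> m \<in> borel_measurable (PiM {1..m} (\<lambda>_. Mu))"
  unfolding D_def
proof (rule borel_measurable_sum)
  fix i assume i: "i \<in> {1..m}"
  note [measurable] = parent_meas[OF i]
  have [measurable]: "i \<in> {1..m}" by (fact i)
  show "(\<lambda>x. (x i - parent x i) powr \<alpha>) \<in> borel_measurable (PiM {1..m} (\<lambda>_. Mu))"
    by measurable
qed



lemma LC:
  assumes a: "\<alpha> > 0" and c: "c > 0"
  shows "(\<integral>\<^sup>+ s. ennreal (\<alpha> * s powr (\<alpha> - 1)) * indicator {0<..<c} s \<partial>lborel) = ennreal (c powr \<alpha>)"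
proof -
  have "((\<lambda>s. s powr (\<alpha> - 1)) has_integral (c powr (\<alpha> - 1 + 1) / (\<alpha> - 1 + 1))) {0..c}"
    using a c by (intro has_integral_powr_from_0) auto
  then have "((\<lambda>s. \<alpha> * s powr (\<alpha> - 1)) has_integral (\<alpha> * (c powr (\<alpha> - 1 + 1) / (\<alpha> - 1 + 1)))) {0..c}"
    by (rule has_integral_mult_right)
  then have h: "((\<lambda>s. \<alpha> * s powr (\<alpha> - 1)) has_integral (c powr \<alpha>)) {0..c}" using a by simp
  have "(\<integral>\<^sup>+ s. ennreal (indicator {0..c} s * (\<alpha> * s powr (\<alpha> - 1))) \<partial>lborel) = ennreal (c powr \<alpha>)"
    by (rule nn_integral_has_integral_lebesgue[OF _ h]) (use a in simp)
  moreover have "(\<integral>\<^sup>+ s. ennreal (\<alpha> * s powr (\<alpha> - 1)) * indicator {0<..<c} s \<partial>lborel)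
      = (\<integral>\<^sup>+ s. ennreal (indicator {0..c} s * (\<alpha> * s powr (\<alpha> - 1))) \<partial>lborel)"
  proof (rule nn_integral_cong_AE)
    show "AE s in lborel. ennreal (\<alpha> * s powr (\<alpha> - 1)) * indicator {0<..<c} s =
        ennreal (indicator {0..c} s * (\<alpha> * s powr (\<alpha> - 1)))"
      using AE_lborel_singleton[of 0] AE_lborel_singleton[of c]
      by eventually_elim (auto split: split_indicator)
  qed
  ultimately show ?thesis by simp
qed

lemma aa_Beta:
  assumes a: "\<alpha> > 0"
  shows "\<alpha> * Beta \<alpha> (real i + 1) = aa \<alpha> i"
proof -
  have nz: "\<alpha> \<notin> \<int>\<^sub>\<le>\<^sub>0" "\<alpha> + 1 \<notin> \<int>\<^sub>\<le>\<^sub>0" using a by (auto elim!: nonpos_Ints_cases)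
  have g1: "Gamma (\<alpha> + 1) = \<alpha> * Gamma \<alpha>" using nz(1) by (rule Gamma_plus1)
  have p: "pochhammer (\<alpha> + 1) i = Gamma (\<alpha> + 1 + real i) / Gamma (\<alpha> + 1)"
    using nz(2) by (rule pochhammer_Gamma)
  have f: "Gamma (real i + 1) = fact i" using Gamma_fact[of i, where 'a = real] by (simp add: add.commute)
  have "Gamma \<alpha> > 0" "Gamma (\<alpha> + 1 + real i) > 0" using a by auto
  then show ?thesis unfolding aa_def Beta_def p f g1
    by (simp add: field_simps add_ac)
qed

lemma Beta_nn:
  assumes a: "\<alpha> > 0"
  shows "(\<integral>\<^sup>+ s. ennreal (\<alpha> * s powr (\<alpha> - 1) * (1 - s) ^ i) * indicator {0<..<1} s \<partial>lborel) = ennreal (aa \<alpha> i)"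
proof -
  have "((\<lambda>t. t powr (\<alpha> - 1) * (1 - t) powr (real i + 1 - 1)) has_integral Beta \<alpha> (real i + 1)) {0..1}"
    using a by (intro has_integral_Beta_real) auto
  then have "((\<lambda>t. \<alpha> * (t powr (\<alpha> - 1) * (1 - t) powr (real i + 1 - 1))) has_integral (\<alpha> * Beta \<alpha> (real i + 1))) {0..1}"
    by (rule has_integral_mult_right)
  then have h: "((\<lambda>t. \<alpha> * (t powr (\<alpha> - 1) * (1 - t) powr (real i))) has_integral (aa \<alpha> i)) {0..1}"
    using aa_Beta[OF a, of i] by simp
  have "(\<integral>\<^sup>+ s. ennreal (indicator {0..1} s * (\<alpha> * (s powr (\<alpha> - 1) * (1 - s) powr (real i)))) \<partial>lborel) = ennreal (aa \<alpha> i)"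
    by (rule nn_integral_has_integral_lebesgue[OF _ h]) (use a in simp)
  moreover have "(\<integral>\<^sup>+ s. ennreal (\<alpha> * s powr (\<alpha> - 1) * (1 - s) ^ i) * indicator {0<..<1} s \<partial>lborel)
      = (\<integral>\<^sup>+ s. ennreal (indicator {0..1} s * (\<alpha> * (s powr (\<alpha> - 1) * (1 - s) powr (real i)))) \<partial>lborel)"
  proof (rule nn_integral_cong_AE)
    show "AE s in lborel. ennreal (\<alpha> * s powr (\<alpha> - 1) * (1 - s) ^ i) * indicator {0<..<1} s =
        ennreal (indicator {0..1} s * (\<alpha> * (s powr (\<alpha> - 1) * (1 - s) powr (real i))))"
      using AE_lborel_singleton[of 0] AE_lborel_singleton[of 1]
      by eventually_elim (auto split: split_indicator simp: powr_realpow mult.assoc)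
  qed
  ultimately show ?thesis by simp
qed



definition pt :: "nat \<Rightarrow> (nat \<Rightarrow> real) \<Rightarrow> real \<Rightarrow> real" where
  "pt i x t = Max ({0} \<union> {x j | j. 1 \<le> j \<and> j < i \<and> x j < t})"

lemma parent_upd: "parent (x(i := t)) i = pt i x t"
  unfolding parent_def pt_def by (rule arg_cong[where f = Max]) auto

lemma pt_fin: fixes i :: nat and x :: "nat \<Rightarrow> real" shows "finite ({0} \<union> {x j | j. 1 \<le> j \<and> j < i \<and> x j < (t::real)})"
proof -
  have "{x j | j. 1 \<le> j \<and> j < i \<and> x j < t} \<subseteq> x ` {..<i}" by auto
  then have "finite {x j | j. 1 \<le> j \<and> j < i \<and> x j < t}" by (rule finite_subset) simp
  then show ?thesis by simp
qed

lemma pt_ge0: "0 \<le> pt i x t"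
  unfolding pt_def using pt_fin by (intro Max_ge) auto

lemma pt_ge: "1 \<le> j \<Longrightarrow> j < i \<Longrightarrow> x j < t \<Longrightarrow> x j \<le> pt i x t"
  unfolding pt_def using pt_fin by (intro Max_ge) auto

lemma pt_in: "pt i x t \<in> {0} \<union> {x j | j. 1 \<le> j \<and> j < i \<and> x j < t}"
  unfolding pt_def using pt_fin by (intro Max_in) auto

lemma pt_lt: "0 < t \<Longrightarrow> pt i x t < t"
  using pt_in[of i x t] by auto

lemma pt_iff:
  assumes "0 < t"
  shows "(0 < s \<and> s < t \<and> (\<forall>j\<in>{1..<i}. x j < t - s \<or> t \<le> x j)) \<longleftrightarrow> (0 < s \<and> s < t - pt i x t)"
proof
  assume h: "0 < s \<and> s < t \<and> (\<forall>j\<in>{1..<i}. x j < t - s \<or> t \<le> x j)"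
  from pt_in[of i x t] consider "pt i x t = 0" | j where "1 \<le> j" "j < i" "x j < t" "pt i x t = x j" by blast
  then show "0 < s \<and> s < t - pt i x t"
  proof cases
    case 2
    with h have "x j < t - s" by auto
    with 2 h show ?thesis by auto
  qed (use h in auto)
next
  assume h: "0 < s \<and> s < t - pt i x t"
  have "s < t" using h pt_ge0[of i x t] by linarith
  moreover have "x j < t - s \<or> t \<le> x j" if "j \<in> {1..<i}" for j
  proof (rule ccontr)
    assume "\<not> (x j < t - s \<or> t \<le> x j)"
    then have "x j < t" "t - s \<le> x j" by auto
    with pt_ge[of j i x t] that h show False by auto
  qed
  ultimately show "0 < s \<and> s < t \<and> (\<forall>j\<in>{1..<i}. x j < t - s \<or> t \<le> x j)" using h by auto
qed

definition FF :: "real \<Rightarrow> nat \<Rightarrow> real \<Rightarrow> (nat \<Rightarrow> real) \<Rightarrow> real \<Rightarrow> ennreal" where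
  "FF \<alpha> i t x s = ennreal (\<alpha> * s powr (\<alpha> - 1)) * indicator {0<..<t} s *
      (if (\<forall>j\<in>{1..<i}. x j < t - s \<or> t \<le> x j) then 1 else 0)"

lemma stepB:
  assumes a: "\<alpha> > 0" and t: "t > 0"
  shows "ennreal ((t - pt i x t) powr \<alpha>) = (\<integral>\<^sup>+ s. FF \<alpha> i t x s \<partial>lborel)"
proof -
  have "(\<integral>\<^sup>+ s. FF \<alpha> i t x s \<partial>lborel) = (\<integral>\<^sup>+ s. ennreal (\<alpha> * s powr (\<alpha> - 1)) * indicator {0<..<t - pt i x t} s \<partial>lborel)"
    by (intro nn_integral_cong) (use pt_iff[OF t, of _ i x] in \<open>auto simp: FF_def split: split_indicator\<close>)
  also have "\<dots> = ennreal ((t - pt i x t) powr \<alpha>)"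
    using pt_lt[OF t, of i x] by (intro LC a) simp
  finally show ?thesis ..
qed

lemma FF_meas:
  assumes "i \<in> {1..m}"
  shows "case_prod (FF \<alpha> i t) \<in> borel_measurable (PiM ({1..m} - {i}) (\<lambda>_. Mu) \<Otimes>\<^sub>M lborel)"
proof -
  have [measurable]: "j \<in> {1..m} - {i}" if "j \<in> {1..<i}" for j using that assms by auto
  show ?thesis unfolding FF_def by measurable
qed

lemma Mu_sf: "sigma_finite_measure Mu"
  using Mu_prob by (rule prob_space_imp_sigma_finite)

lemma PS: "product_sigma_finite (\<lambda>_::nat. Mu)"
  unfolding product_sigma_finite_def using Mu_sf by simp

lemma PiMu_prob: "prob_space (PiM I (\<lambda>_::nat. Mu))"
  by (rule prob_space_PiM) (rule Mu_prob)

lemma inner_meas: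
  assumes i: "i \<in> {1..m}" and s: "0 < s" "s < t" and t: "t \<le> 1"
  shows "(\<integral>\<^sup>+ x. (if (\<forall>j\<in>{1..<i}. x j < t - s \<or> t \<le> x j) then 1 else 0) \<partial>PiM ({1..m} - {i}) (\<lambda>_. Mu))
     = ennreal ((1 - s) ^ (i - 1))"
proof -
  interpret PS: product_sigma_finite "\<lambda>_::nat. Mu" by (rule PS)
  define I where "I = {1..m} - {i}"
  define A where "A j = (if j < i then - {t - s..<t} else (UNIV::real set))" for j
  have Am: "A j \<in> sets borel" for j unfolding A_def by (auto intro: borel_comp)
  have sp: "space (PiM I (\<lambda>_. Mu)) = PiE I (\<lambda>_. UNIV)" by (simp add: space_PiM)
  have "(\<integral>\<^sup>+ x. (if (\<forall>j\<in>{1..<i}. x j < t - s \<or> t \<le> x j) then 1 else 0) \<partial>PiM I (\<lambda>_. Mu))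
      = (\<integral>\<^sup>+ x. 1 * indicator (PiE I A) x \<partial>PiM I (\<lambda>_. Mu))"
  proof (rule nn_integral_cong)
    fix x assume x: "x \<in> space (PiM I (\<lambda>_. Mu))"
    have "(\<forall>j\<in>{1..<i}. x j < t - s \<or> t \<le> x j) \<longleftrightarrow> x \<in> PiE I A"
    proof -
      have "x \<in> PiE I (\<lambda>_. UNIV)" using x sp by simp
      then show ?thesis using i unfolding I_def A_def by (auto simp: PiE_iff not_le)
    qed
    then show "(if (\<forall>j\<in>{1..<i}. x j < t - s \<or> t \<le> x j) then 1 else 0) = (1::ennreal) * indicator (PiE I A) x"
      by (simp split: split_indicator)
  qed
  also have "\<dots> = emeasure (PiM I (\<lambda>_. Mu)) (PiE I A)"
    by (subst nn_integral_cmult_indicator) (auto simp: Am I_def intro!: sets_PiM_I_finite)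
  also have "\<dots> = (\<Prod>j\<in>I. emeasure Mu (A j))"
    by (rule PS.emeasure_PiM) (auto simp: I_def Am)
  also have "\<dots> = (\<Prod>j\<in>{1..<i}. emeasure Mu (A j)) * (\<Prod>j\<in>{i<..m}. emeasure Mu (A j))"
  proof -
    have "I = {1..<i} \<union> {i<..m}" using i by (auto simp: I_def)
    then show ?thesis by (simp only:) (rule prod.union_disjoint, auto)
  qed
  also have "(\<Prod>j\<in>{i<..m}. emeasure Mu (A j)) = 1"
    by (rule prod.neutral) (auto simp: A_def prob_space.emeasure_space_1[OF Mu_prob, simplified])
  also have "(\<Prod>j\<in>{1..<i}. emeasure Mu (A j)) = (\<Prod>j\<in>{1..<i}. ennreal (1 - s))"
    by (rule prod.cong) (use s t in \<open>auto simp del: emeasure_uniform_measure simp: A_def Mu_compl\<close>)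
  also have "\<dots> = ennreal ((1 - s) ^ (i - 1))"
    using s t by (simp add: ennreal_power)
  finally show ?thesis by (simp add: I_def)
qed

lemma stepC:
  assumes a: "\<alpha> > 0" and i: "i \<in> {1..m}" and t: "0 < t" "t \<le> 1"
  shows "(\<integral>\<^sup>+ x. ennreal ((t - pt i x t) powr \<alpha>) \<partial>PiM ({1..m} - {i}) (\<lambda>_. Mu))
    = (\<integral>\<^sup>+ s. ennreal (\<alpha> * s powr (\<alpha> - 1) * (1 - s) ^ (i - 1)) * indicator {0<..<t} s \<partial>lborel)"
proof -
  interpret PI: prob_space "PiM ({1..m} - {i}) (\<lambda>_. Mu)" by (rule PiMu_prob)
  interpret PL: pair_sigma_finite "PiM ({1..m} - {i}) (\<lambda>_. Mu)" lborel
    by (intro pair_sigma_finite.intro PI.sigma_finite_measure_axioms lborel.sigma_finite_measure_axioms)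
  have [measurable]: "j \<in> {1..m} - {i}" if "j \<in> {1..<i}" for j using that i by auto
  have "(\<integral>\<^sup>+ x. ennreal ((t - pt i x t) powr \<alpha>) \<partial>PiM ({1..m} - {i}) (\<lambda>_. Mu))
      = (\<integral>\<^sup>+ x. (\<integral>\<^sup>+ s. FF \<alpha> i t x s \<partial>lborel) \<partial>PiM ({1..m} - {i}) (\<lambda>_. Mu))"
    by (intro nn_integral_cong stepB a t)
  also have "\<dots> = (\<integral>\<^sup>+ s. (\<integral>\<^sup>+ x. FF \<alpha> i t x s \<partial>PiM ({1..m} - {i}) (\<lambda>_. Mu)) \<partial>lborel)"
    by (rule PL.Fubini'[OF FF_meas[OF i], symmetric])
  also have "\<dots> = (\<integral>\<^sup>+ s. ennreal (\<alpha> * s powr (\<alpha> - 1) * (1 - s) ^ (i - 1)) * indicator {0<..<t} s \<partial>lborel)"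
  proof (rule nn_integral_cong)
    fix s :: real
    have "(\<integral>\<^sup>+ x. FF \<alpha> i t x s \<partial>PiM ({1..m} - {i}) (\<lambda>_. Mu)) =
      (ennreal (\<alpha> * s powr (\<alpha> - 1)) * indicator {0<..<t} s) *
      (\<integral>\<^sup>+ x. (if (\<forall>j\<in>{1..<i}. x j < t - s \<or> t \<le> x j) then 1 else 0) \<partial>PiM ({1..m} - {i}) (\<lambda>_. Mu))"
      unfolding FF_def by (rule nn_integral_cmult) measurable
    also have "\<dots> = ennreal (\<alpha> * s powr (\<alpha> - 1) * (1 - s) ^ (i - 1)) * indicator {0<..<t} s"
    proof (cases "s \<in> {0<..<t}")
      case True
      have m: "ennreal (\<alpha> * s powr (\<alpha> - 1)) * ennreal ((1 - s) ^ (i - 1)) = ennreal (\<alpha> * s powr (\<alpha> - 1) * (1 - s) ^ (i - 1))"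
        by (rule ennreal_mult[symmetric]) (use a True t in auto)
      show ?thesis using inner_meas[OF i _ _ t(2), of s] True m
        by (simp add: mult.assoc)
    qed simp
    finally show "(\<integral>\<^sup>+ x. FF \<alpha> i t x s \<partial>PiM ({1..m} - {i}) (\<lambda>_. Mu)) =
        ennreal (\<alpha> * s powr (\<alpha> - 1) * (1 - s) ^ (i - 1)) * indicator {0<..<t} s" .
  qed
  finally show ?thesis .
qed



lemma pred_Ioo1[measurable]: "Measurable.pred (borel \<Otimes>\<^sub>M borel) (\<lambda>x::real\<times>real. snd x \<in> {0<..<fst x})"
  unfolding greaterThanLessThan_iff by measurable

lemma pred_Ioo2[measurable]: "Measurable.pred (borel \<Otimes>\<^sub>M borel) (\<lambda>x::real\<times>real. fst x \<in> {0<..<snd x})"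
  unfolding greaterThanLessThan_iff by measurable

lemma inner_t:
  "(\<integral>\<^sup>+ t. indicator {0<..<t} s * indicator {0<..1} t \<partial>lborel) = indicator {0<..<1} s * ennreal (1 - s)"
proof (cases "0 < s \<and> s < 1")
  case True
  have "(\<integral>\<^sup>+ t. indicator {0<..<t} s * indicator {0<..1} t \<partial>lborel) = (\<integral>\<^sup>+ t. indicator {s<..1} t \<partial>lborel)"
    by (intro nn_integral_cong) (use True in \<open>auto split: split_indicator\<close>)
  also have "\<dots> = ennreal (1 - s)" using True by simp
  finally show ?thesis using True by simp
next
  case False
  have "(\<integral>\<^sup>+ t. indicator {0<..<t} s * indicator {0<..1} t \<partial>lborel) = (\<integral>\<^sup>+ t. (0::ennreal) \<partial>(lborel::real measure))"
    by (intro nn_integral_cong) (use False in \<open>auto split: split_indicator\<close>)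
  then show ?thesis using False by simp
qed

lemma term_eq:
  assumes a: "\<alpha> > 0" and i: "i \<in> {1..m}"
  shows "(\<integral>\<^sup>+ x. ennreal ((x i - parent x i) powr \<alpha>) \<partial>PiM {1..m} (\<lambda>_. Mu)) = ennreal (aa \<alpha> i)"
proof -
  interpret PS: product_sigma_finite "\<lambda>_::nat. Mu" by (rule PS)
  define I where "I = {1..m} - {i}"
  define h where "h s = ennreal (\<alpha> * s powr (\<alpha> - 1) * (1 - s) ^ (i - 1))" for s :: real
  have ins: "{1..m} = insert i I" using i by (auto simp: I_def)
  have fm: "(\<lambda>x. ennreal ((x i - parent x i) powr \<alpha>)) \<in> borel_measurable (PiM (insert i I) (\<lambda>_. Mu))"
  proof -
    note [measurable] = parent_meas[OF i]
    have [measurable]: "i \<in> {1..m}" by (fact i)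
    have "(\<lambda>x. ennreal ((x i - parent x i) powr \<alpha>)) \<in> borel_measurable (PiM {1..m} (\<lambda>_. Mu))"
      by measurable
    then show ?thesis by (simp only: ins)
  qed
  have hm[measurable]: "h \<in> borel_measurable borel" unfolding h_def by measurable
  have "(\<integral>\<^sup>+ x. ennreal ((x i - parent x i) powr \<alpha>) \<partial>PiM {1..m} (\<lambda>_. Mu))
      = (\<integral>\<^sup>+ t. (\<integral>\<^sup>+ x. ennreal (((x(i := t)) i - parent (x(i := t)) i) powr \<alpha>) \<partial>PiM I (\<lambda>_. Mu)) \<partial>Mu)"
    unfolding ins using i by (subst PS.product_nn_integral_insert_rev[OF _ _ fm]) (auto simp: I_def)
  also have "\<dots> = (\<integral>\<^sup>+ t. (\<integral>\<^sup>+ s. h s * indicator {0<..<t} s \<partial>lborel) \<partial>Mu)"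
  proof (rule nn_integral_cong_AE)
    show "AE t in Mu. (\<integral>\<^sup>+ x. ennreal (((x(i := t)) i - parent (x(i := t)) i) powr \<alpha>) \<partial>PiM I (\<lambda>_. Mu))
        = (\<integral>\<^sup>+ s. h s * indicator {0<..<t} s \<partial>lborel)"
    proof (rule AE_uniform_measureI)
      show "AE t in lborel. t \<in> {0<..1} \<longrightarrow> (\<integral>\<^sup>+ x. ennreal (((x(i := t)) i - parent (x(i := t)) i) powr \<alpha>) \<partial>PiM I (\<lambda>_. Mu))
        = (\<integral>\<^sup>+ s. h s * indicator {0<..<t} s \<partial>lborel)"
        using stepC[OF a i] by (auto simp: parent_upd I_def h_def)
    qed simp
  qed
  also have "\<dots> = (\<integral>\<^sup>+ t. (\<integral>\<^sup>+ s. h s * indicator {0<..<t} s \<partial>lborel) * indicator {0<..1} t \<partial>lborel) / emeasure lborel {0<..1::real}"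
  proof (rule nn_integral_uniform_measure)
    have e: "(\<lambda>(t, s). h s * indicator {0<..<t} s) = (\<lambda>p::real\<times>real. h (snd p) * (if 0 < snd p \<and> snd p < fst p then 1 else 0))"
      by (auto simp: fun_eq_iff split: split_indicator)
    have "(\<lambda>(t, s). h s * indicator {0<..<t} s) \<in> borel_measurable (borel \<Otimes>\<^sub>M lborel)"
      unfolding e by measurable
    then show "(\<lambda>t. \<integral>\<^sup>+ s. h s * indicator {0<..<t} s \<partial>lborel) \<in> borel_measurable lborel"
      using lborel.borel_measurable_nn_integral[of "\<lambda>t s. h s * indicator {0<..<t} s" borel] by simp
  qed simp
  also have "\<dots> = (\<integral>\<^sup>+ t. (\<integral>\<^sup>+ s. h s * indicator {0<..<t} s * indicator {0<..1} t \<partial>lborel) \<partial>lborel)"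
    by (simp add: divide_ennreal_def nn_integral_multc)
  also have "\<dots> = (\<integral>\<^sup>+ s. (\<integral>\<^sup>+ t. h s * indicator {0<..<t} s * indicator {0<..1} t \<partial>lborel) \<partial>lborel)"
    by (rule lborel_pair.Fubini') measurable
  also have "\<dots> = (\<integral>\<^sup>+ s. h s * (indicator {0<..<1} s * ennreal (1 - s)) \<partial>lborel)"
  proof (intro nn_integral_cong)
    fix s :: real
    have e: "(\<lambda>t::real. indicator {0<..<t} s * indicator {0<..1} t) = (\<lambda>t. (if 0 < s \<and> s < t then 1 else 0) * (indicator {0<..1} t :: ennreal))"
      by (auto simp: fun_eq_iff split: split_indicator)
    have m: "(\<lambda>t::real. indicator {0<..<t} s * indicator {0<..1} t :: ennreal) \<in> borel_measurable lborel"
      unfolding e by measurable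
    show "(\<integral>\<^sup>+ t. h s * indicator {0<..<t} s * indicator {0<..1} t \<partial>lborel) = h s * (indicator {0<..<1} s * ennreal (1 - s))"
      using nn_integral_cmult[OF m, of "h s"] by (simp add: inner_t mult.assoc)
  qed
  also have "\<dots> = (\<integral>\<^sup>+ s. ennreal (\<alpha> * s powr (\<alpha> - 1) * (1 - s) ^ i) * indicator {0<..<1} s \<partial>lborel)"
  proof (intro nn_integral_cong)
    fix s :: real
    show "h s * (indicator {0<..<1} s * ennreal (1 - s)) = ennreal (\<alpha> * s powr (\<alpha> - 1) * (1 - s) ^ i) * indicator {0<..<1} s"
    proof (cases "0 < s \<and> s < 1")
      case True
      have "(1 - s) ^ (i - 1) * (1 - s) = (1 - s) ^ i" using i by (cases i) auto
      then have "\<alpha> * s powr (\<alpha> - 1) * (1 - s) ^ (i - 1) * (1 - s) = \<alpha> * s powr (\<alpha> - 1) * (1 - s) ^ i"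
        by (simp add: mult.assoc)
      then show ?thesis using True a unfolding h_def
        by (simp add: ennreal_mult[symmetric])
    qed (auto simp: h_def)
  qed
  also have "\<dots> = ennreal (aa \<alpha> i)" by (rule Beta_nn[OF a])
  finally show ?thesis .
qed



lemma aa_nonneg: "\<alpha> > 0 \<Longrightarrow> 0 \<le> aa \<alpha> i"
  unfolding aa_def using poch_pos[of \<alpha> i] by simp

lemma ED_eq:
  assumes a: "\<alpha> > 0"
  shows "ED \<alpha> m = (\<Sum>i=1..m. aa \<alpha> i)"
proof -
  have "ED \<alpha> m = enn2real (\<integral>\<^sup>+ x. ennreal (D \<alpha> m x) \<partial>PiM {1..m} (\<lambda>_. Mu))"
    unfolding ED_def U_def
    by (intro integral_eq_nn_integral D_meas AE_I2) (auto simp: D_def intro!: sum_nonneg)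
  also have "(\<integral>\<^sup>+ x. ennreal (D \<alpha> m x) \<partial>PiM {1..m} (\<lambda>_. Mu))
      = (\<integral>\<^sup>+ x. (\<Sum>i\<in>{1..m}. ennreal ((x i - parent x i) powr \<alpha>)) \<partial>PiM {1..m} (\<lambda>_. Mu))"
    unfolding D_def by (intro nn_integral_cong) (simp add: sum_ennreal)
  also have "\<dots> = (\<Sum>i\<in>{1..m}. (\<integral>\<^sup>+ x. ennreal ((x i - parent x i) powr \<alpha>) \<partial>PiM {1..m} (\<lambda>_. Mu)))"
  proof (rule nn_integral_sum)
    fix i assume i: "i \<in> {1..m}"
    note [measurable] = parent_meas[OF i]
    have [measurable]: "i \<in> {1..m}" by (fact i)
    show "(\<lambda>x. ennreal ((x i - parent x i) powr \<alpha>)) \<in> borel_measurable (PiM {1..m} (\<lambda>_. Mu))"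
      by measurable
  qed
  also have "\<dots> = (\<Sum>i\<in>{1..m}. ennreal (aa \<alpha> i))"
    by (intro sum.cong refl term_eq a) 
  also have "\<dots> = ennreal (\<Sum>i\<in>{1..m}. aa \<alpha> i)"
    using aa_nonneg[OF a] by (simp add: sum_ennreal)
  finally show ?thesis using aa_nonneg[OF a] by (simp add: sum_nonneg)
qed

theorem proposition1:
  shows "(\<forall>\<alpha>::real. 0 < \<alpha> \<and> \<alpha> < 1 \<longrightarrow>
            (\<lambda>m. ED \<alpha> m) \<sim>[at_top] (\<lambda>m. Gamma (\<alpha> + 1) / (1 - \<alpha>) * real m powr (1 - \<alpha>)))
       \<and> ((\<lambda>m. ED 1 m - ln (real m)) \<longlonglongrightarrow> euler_mascheroni - 1)
       \<and> (\<forall>\<alpha>::real. 1 < \<alpha> \<longrightarrow>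
            (\<lambda>m. ED \<alpha> m - 1 / (\<alpha> - 1)) \<in> O(\<lambda>m. real m powr (1 - \<alpha>)))"
  by (rule asym_main) (rule ED_eq)

end
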